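(* Under the hypotheses and notation of the following setting: $\mathcal{M}$ is a reversible, ergodic Markov chain on finite $\Omega$, $N=|\Omega|$, transition matrix $P$, stationary distribution $\pi$, eigenvalues $1=\lambda_0>\lambda_1\geq\cdots\geq\lambda_{N-1}\geq-1$, underlying graph $\mathcal{G}=(\Omega,\Gamma)$ with $\{x,y\}\in\Gamma$ iff $P(x,y)>0$, $Q(x,y)=\pi(x)P(x,y)$, and $\Sigma=\{\sigma_x:x\in\Omega\}$ a choice of cycles $\sigma_x$ in $\mathcal{G}$ from $x$ to $x$ of odd length $|\sigma_x|$. Define \[ \eta'(\Sigma)=\max_{e\in\Gamma}\frac{1}{Q(e)}\sum_{x\in\Omega:\,e\in\sigma_x}\pi(x),\qquad \ell(\Sigma)=\max_{x\in\Omega}|\sigma_x|. \] Then $(1+\lambda_{N-1})^{-1}\leq \eta'(\Sigma)\,\ell(\Sigma)/2$. In particular, if $\ell(\Sigma)=1$ (so every $\sigma_x$ is a self-loop, i.e. $P(x,x)>0$ for all $x$), then $(1+\lambda_{N-1})^{-1}\leq \tfrac12\max_{x\in\Omega}P(x,x)^{-1}$.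
   Context: A 1-cycle is a walk along a self-loop edge $\{x,x\}$, present when $P(x,x)>0$. *)

theory Defs
  imports Complex_Main
begin

definition stochastic :: "('a::finite \<Rightarrow> 'a \<Rightarrow> real) \<Rightarrow> bool" where
  "stochastic P \<longleftrightarrow> (\<forall>x y. P x y \<ge> 0) \<and> (\<forall>x. (\<Sum>y\<in>UNIV. P x y) = 1)"

definition prob_dist :: "('a::finite \<Rightarrow> real) \<Rightarrow> bool" where
  "prob_dist \<pi> \<longleftrightarrow> (\<forall>x. \<pi> x \<ge> 0) \<and> (\<Sum>x\<in>UNIV. \<pi> x) = 1"

definition stationary :: "('a::finite \<Rightarrow> 'a \<Rightarrow> real) \<Rightarrow> ('a \<Rightarrow> real) \<Rightarrow> bool" where
  "stationary P \<pi> \<longleftrightarrow> (\<forall>y. (\<Sum>x\<in>UNIV. \<pi> x * P x y) = \<pi> y)"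

definition reversible :: "('a \<Rightarrow> 'a \<Rightarrow> real) \<Rightarrow> ('a \<Rightarrow> real) \<Rightarrow> bool" where
  "reversible P \<pi> \<longleftrightarrow> (\<forall>x y. \<pi> x * P x y = \<pi> y * P y x)"

fun mpow :: "('a::finite \<Rightarrow> 'a \<Rightarrow> real) \<Rightarrow> nat \<Rightarrow> 'a \<Rightarrow> 'a \<Rightarrow> real" where
  "mpow P 0 = (\<lambda>x y. if x = y then 1 else 0)"
| "mpow P (Suc n) = (\<lambda>x y. \<Sum>z\<in>UNIV. mpow P n x z * P z y)"

definition irreducible_chain :: "('a::finite \<Rightarrow> 'a \<Rightarrow> real) \<Rightarrow> bool" where
  "irreducible_chain P \<longleftrightarrow> (\<forall>x y. \<exists>n. mpow P n x y > 0)"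

definition aperiodic_chain :: "('a::finite \<Rightarrow> 'a \<Rightarrow> real) \<Rightarrow> bool" where
  "aperiodic_chain P \<longleftrightarrow> (\<forall>x. Gcd {n. n \<ge> 1 \<and> mpow P n x x > 0} = 1)"

definition ergodic_chain :: "('a::finite \<Rightarrow> 'a \<Rightarrow> real) \<Rightarrow> bool" where
  "ergodic_chain P \<longleftrightarrow> irreducible_chain P \<and> aperiodic_chain P"

text \<open>Eigenvalues of P (acting on functions 'a => real); for a reversible chain all
  eigenvalues are real. lambda_min P is the smallest eigenvalue lambda_{N-1}.\<close>
definition eigenvalues :: "('a::finite \<Rightarrow> 'a \<Rightarrow> real) \<Rightarrow> real set" where
  "eigenvalues P = {mu. \<exists>v::'a \<Rightarrow> real. v \<noteq> (\<lambda>_. 0) \<and> (\<forall>x. (\<Sum>y\<in>UNIV. P x y * v y) = mu * v x)}"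

definition lambda_min :: "('a::finite \<Rightarrow> 'a \<Rightarrow> real) \<Rightarrow> real" where
  "lambda_min P = Min (eigenvalues P)"

text \<open>Underlying graph: edges are unordered pairs {x,y} (self-loops {x}) with P x y > 0.\<close>
definition Gamma :: "('a \<Rightarrow> 'a \<Rightarrow> real) \<Rightarrow> 'a set set" where
  "Gamma P = {{x, y} | x y. P x y > 0}"

text \<open>Q(e) = pi(x) P(x,y) for e = {x,y}; well defined by reversibility.\<close>
definition Qedge :: "('a \<Rightarrow> 'a \<Rightarrow> real) \<Rightarrow> ('a \<Rightarrow> real) \<Rightarrow> 'a set \<Rightarrow> real" where
  "Qedge P \<pi> e = (SOME q. \<exists>x y. e = {x, y} \<and> P x y > 0 \<and> q = \<pi> x * P x y)"

definition is_walk :: "('a \<Rightarrow> 'a \<Rightarrow> real) \<Rightarrow> 'a list \<Rightarrow> bool" where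
  "is_walk P vs \<longleftrightarrow> vs \<noteq> [] \<and> (\<forall>i. Suc i < length vs \<longrightarrow> P (vs ! i) (vs ! Suc i) > 0)"

definition walk_len :: "'a list \<Rightarrow> nat" where
  "walk_len vs = length vs - 1"

definition walk_edges :: "'a list \<Rightarrow> 'a set set" where
  "walk_edges vs = {{vs ! i, vs ! Suc i} | i. Suc i < length vs}"

text \<open>A cycle from x to x: closed walk of positive length, no repeated vertex
  except the common endpoint (a 1-cycle is a self-loop).\<close>
definition is_cycle_at :: "('a \<Rightarrow> 'a \<Rightarrow> real) \<Rightarrow> 'a \<Rightarrow> 'a list \<Rightarrow> bool" where
  "is_cycle_at P x vs \<longleftrightarrow> is_walk P vs \<and> length vs \<ge> 2 \<and> hd vs = x \<and> last vs = x
      \<and> distinct (butlast vs)"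

definition eta' :: "('a::finite \<Rightarrow> 'a \<Rightarrow> real) \<Rightarrow> ('a \<Rightarrow> real) \<Rightarrow> ('a \<Rightarrow> 'a list) \<Rightarrow> real" where
  "eta' P \<pi> \<sigma> = Max ((\<lambda>e. (\<Sum>x\<in>{x. e \<in> walk_edges (\<sigma> x)}. \<pi> x) / Qedge P \<pi> e) ` Gamma P)"

definition ell :: "('a::finite \<Rightarrow> 'a list) \<Rightarrow> nat" where
  "ell \<sigma> = Max (range (\<lambda>x. walk_len (\<sigma> x)))"

end

theory Submission
  imports Defs "HOL-Analysis.Analysis"
begin

lemma Qedge_eq:
  assumes rev: "reversible P \<pi>" and p: "P x y > 0"
  shows "Qedge P \<pi> {x, y} = \<pi> x * P x y"
  unfolding Qedge_def
proof (rule some_equality)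
  show "\<exists>a b. {x, y} = {a, b} \<and> P a b > 0 \<and> \<pi> x * P x y = \<pi> a * P a b" using p by blast
next
  fix q assume "\<exists>a b. {x, y} = {a, b} \<and> P a b > 0 \<and> q = \<pi> a * P a b"
  then obtain a b where "{x,y} = {a,b}" "q = \<pi> a * P a b" by blast
  then show "q = \<pi> x * P x y" using rev unfolding reversible_def by (auto simp: doubleton_eq_iff)
qed

lemma alt_tele: "(\<Sum>i<n. (-1::real)^i * (a i + a (Suc i))) = a 0 - (-1)^n * a n"
  by (induction n) (auto simp: algebra_simps)

lemma quad_id:
  fixes P :: "'a::finite \<Rightarrow> 'a \<Rightarrow> real"
  assumes st: "stochastic P" and stat: "stationary P \<pi>"
    and eig: "\<forall>x. (\<Sum>y\<in>UNIV. P x y * v y) = \<mu> * v x"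
  shows "(\<Sum>x\<in>UNIV. \<Sum>y\<in>UNIV. \<pi> x * P x y * (v x + v y)^2) = 2*(1+\<mu>) * (\<Sum>x\<in>UNIV. \<pi> x * (v x)^2)"
proof -
  have e: "\<pi> x * P x y * (v x + v y)^2 = \<pi> x * (v x)^2 * P x y + \<pi> x * P x y * (v y)^2
      + 2 * (\<pi> x * v x) * (P x y * v y)" for x y
    by (simp add: power2_eq_square algebra_simps)
  have s1: "(\<Sum>x\<in>UNIV. \<Sum>y\<in>UNIV. \<pi> x * (v x)^2 * P x y) = (\<Sum>x\<in>UNIV. \<pi> x * (v x)^2)"
    using st unfolding stochastic_def by (simp add: sum_distrib_left[symmetric])
  have s2: "(\<Sum>x\<in>UNIV. \<Sum>y\<in>UNIV. \<pi> x * P x y * (v y)^2) = (\<Sum>y\<in>UNIV. \<pi> y * (v y)^2)"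
    apply (subst sum.swap)
    using stat unfolding stationary_def by (simp add: sum_distrib_right[symmetric])
  have s3: "(\<Sum>x\<in>UNIV. \<Sum>y\<in>UNIV. 2 * (\<pi> x * v x) * (P x y * v y)) = 2 * \<mu> * (\<Sum>x\<in>UNIV. \<pi> x * (v x)^2)"
  proof -
    have "(\<Sum>x\<in>UNIV. \<Sum>y\<in>UNIV. 2 * (\<pi> x * v x) * (P x y * v y)) = (\<Sum>x\<in>UNIV. 2 * (\<pi> x * v x) * (\<Sum>y\<in>UNIV. P x y * v y))"
      by (simp add: sum_distrib_left)
    also have "\<dots> = (\<Sum>x\<in>UNIV. 2 * \<mu> * (\<pi> x * (v x)^2))"
      using eig by (simp add: power2_eq_square algebra_simps)
    also have "\<dots> = 2 * \<mu> * (\<Sum>x\<in>UNIV. \<pi> x * (v x)^2)"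
      by (simp add: sum_distrib_left)
    finally show ?thesis .
  qed
  show ?thesis
    unfolding e sum.distrib s1 s2 s3 by (simp add: algebra_simps)
qed


lemma eig_orth:
  fixes P :: "'a::finite \<Rightarrow> 'a \<Rightarrow> real"
  assumes rev: "reversible P \<pi>"
    and ev: "\<forall>x. (\<Sum>y\<in>UNIV. P x y * v y) = \<mu> * v x"
    and ew: "\<forall>x. (\<Sum>y\<in>UNIV. P x y * w y) = \<nu> * w x"
    and ne: "\<mu> \<noteq> \<nu>"
  shows "(\<Sum>x\<in>UNIV. \<pi> x * v x * w x) = 0"
proof -
  have "\<mu> * (\<Sum>x\<in>UNIV. \<pi> x * v x * w x) = (\<Sum>x\<in>UNIV. \<pi> x * w x * (\<Sum>y\<in>UNIV. P x y * v y))"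
    using ev by (simp add: sum_distrib_left algebra_simps)
  also have "\<dots> = (\<Sum>x\<in>UNIV. \<Sum>y\<in>UNIV. (\<pi> x * P x y) * w x * v y)"
    by (simp add: sum_distrib_left algebra_simps)
  also have "\<dots> = (\<Sum>x\<in>UNIV. \<Sum>y\<in>UNIV. (\<pi> y * P y x) * w x * v y)"
    using rev unfolding reversible_def by simp
  also have "\<dots> = (\<Sum>y\<in>UNIV. \<pi> y * v y * (\<Sum>x\<in>UNIV. P y x * w x))"
    by (subst sum.swap) (simp add: sum_distrib_left algebra_simps)
  also have "\<dots> = \<nu> * (\<Sum>x\<in>UNIV. \<pi> x * v x * w x)"
    using ew by (simp add: sum_distrib_left algebra_simps)
  finally show ?thesis using ne by simp
qed

lemma eig_finite:
  fixes P :: "'a::finite \<Rightarrow> 'a \<Rightarrow> real"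
  assumes rev: "reversible P \<pi>" and pos: "\<forall>x. \<pi> x > 0"
  shows "finite (eigenvalues P)"
proof -
  define E where "E = eigenvalues P"
  define V where "V = (\<lambda>\<mu>. SOME v::'a \<Rightarrow> real. v \<noteq> (\<lambda>_. 0) \<and> (\<forall>x. (\<Sum>y\<in>UNIV. P x y * v y) = \<mu> * v x))"
  have V: "V \<mu> \<noteq> (\<lambda>_. 0) \<and> (\<forall>x. (\<Sum>y\<in>UNIV. P x y * V \<mu> y) = \<mu> * V \<mu> x)" if "\<mu> \<in> E" for \<mu>
  proof -
    have "\<exists>v::'a \<Rightarrow> real. v \<noteq> (\<lambda>_. 0) \<and> (\<forall>x. (\<Sum>y\<in>UNIV. P x y * v y) = \<mu> * v x)"
      using that unfolding E_def eigenvalues_def by auto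
    then show ?thesis unfolding V_def by (rule someI_ex)
  qed
  define W where "W = (\<lambda>\<mu>. (\<chi> i. sqrt (\<pi> i) * V \<mu> i) :: real^'a)"
  have inner: "W \<mu> \<bullet> W \<nu> = (\<Sum>x\<in>UNIV. \<pi> x * V \<mu> x * V \<nu> x)" for \<mu> \<nu>
    unfolding W_def inner_vec_def using pos
    by (intro sum.cong) (auto simp: algebra_simps less_imp_le)
  have orth: "W \<mu> \<bullet> W \<nu> = 0" if "\<mu> \<in> E" "\<nu> \<in> E" "\<mu> \<noteq> \<nu>" for \<mu> \<nu>
    unfolding inner using eig_orth[OF rev] V[OF that(1)] V[OF that(2)] that(3) by blast
  have nz: "W \<mu> \<noteq> 0" if mu: "\<mu> \<in> E" for \<mu>
  proof
    assume "W \<mu> = 0"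
    obtain x where "V \<mu> x \<noteq> 0" using V[OF mu] by auto
    then have "W \<mu> $ x \<noteq> 0" using pos unfolding W_def by (metis less_irrefl mult_eq_0_iff real_sqrt_eq_zero_cancel_iff vec_lambda_beta)
    then show False using \<open>W \<mu> = 0\<close> by simp
  qed
  have inj: "inj_on W E"
  proof (rule inj_onI)
    fix \<mu> \<nu> assume a: "\<mu> \<in> E" "\<nu> \<in> E" "W \<mu> = W \<nu>"
    show "\<mu> = \<nu>"
    proof (rule ccontr)
      assume "\<mu> \<noteq> \<nu>"
      then have "W \<mu> \<bullet> W \<mu> = 0" using orth[OF a(1,2)] a(3) by simp
      then show False using nz[OF a(1)] by simp
    qed
  qed
  have "pairwise orthogonal (W ` E)"
    unfolding pairwise_def orthogonal_def using orth by auto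
  moreover have "0 \<notin> W ` E" using nz by auto
  ultimately have "independent (W ` E)" by (rule pairwise_orthogonal_independent)
  then have "finite (W ` E)" by (rule finiteI_independent)
  then show ?thesis using inj finite_imageD unfolding E_def by blast
qed


lemma cyc_inj:
  assumes d: "distinct (butlast vs)" and len: "length vs \<ge> 2" and hl: "hd vs = last vs"
    and od: "odd (length vs - 1)"
  shows "inj_on (\<lambda>i. {vs!i, vs!Suc i}) {..<length vs - 1}"
proof (rule inj_onI)
  define L where "L = length vs - 1"
  have dd: "i = j" if "i < L" "j < L" "vs!i = vs!j" for i j
  proof -
    have "butlast vs ! i = butlast vs ! j" using that by (simp add: nth_butlast L_def)
    then show ?thesis using d that by (simp add: nth_eq_iff_index_eq L_def)
  qed
  have lastv: "vs ! L = vs ! 0"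
  proof -
    have ne: "vs \<noteq> []" using len by auto
    have "vs ! L = last vs" using ne by (simp add: last_conv_nth L_def)
    also have "\<dots> = hd vs" using hl by simp
    also have "\<dots> = vs ! 0" using ne by (simp add: hd_conv_nth)
    finally show ?thesis .
  qed
  fix i j assume i: "i \<in> {..<length vs - 1}" and j: "j \<in> {..<length vs - 1}"
    and eq: "{vs!i, vs!Suc i} = {vs!j, vs!Suc j}"
  have i': "i < L" and j': "j < L" using i j by (auto simp: L_def)
  have oL: "odd L" using od by (simp add: L_def)
  have c: "i = j" if a: "vs!i = vs!Suc j" "vs!Suc i = vs!j" and i': "i < L" and j': "j < L" for i j
  proof (cases "Suc j < L")
    case True
    then have ij: "i = Suc j" using dd a i' by metis
    show ?thesis
    proof (cases "Suc i < L")
      case True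
      then have "Suc i = j" using dd a j' by metis
      then show ?thesis using ij by simp
    next
      case False
      then have "Suc i = L" using i' by simp
      then have "vs ! 0 = vs ! j" using a lastv by simp
      then have "j = 0" using dd j' by (metis oL odd_pos)
      then have "L = 2" using ij \<open>Suc i = L\<close> by simp
      then show ?thesis using oL by simp
    qed
  next
    case False
    then have "Suc j = L" using j' by simp
    then have "vs ! i = vs ! 0" using a lastv by simp
    then have i0: "i = 0" using dd i' by (metis oL odd_pos)
    show ?thesis
    proof (cases "1 < L")
      case True
      then have "1 = j" using dd a j' i0 by (metis One_nat_def)
      then have "L = 2" using \<open>Suc j = L\<close> by simp
      then show ?thesis using oL by simp
    next
      case False
      then show ?thesis using i0 j' by simp
    qed
  qed
  from eq have "(vs!i = vs!j \<and> vs!Suc i = vs!Suc j) \<or> (vs!i = vs!Suc j \<and> vs!Suc i = vs!j)"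
    by (auto simp: doubleton_eq_iff)
  then show "i = j" using dd[OF i' j'] c[of i j, OF _ _ i' j'] by blast
qed


lemma key:
  fixes P :: "'a::finite \<Rightarrow> 'a \<Rightarrow> real" and \<pi> :: "'a \<Rightarrow> real" and \<sigma> :: "'a \<Rightarrow> 'a list"
  assumes st: "stochastic P" and pos: "\<forall>x. \<pi> x > 0" and stat: "stationary P \<pi>"
    and rev: "reversible P \<pi>"
    and cyc: "\<forall>x. is_cycle_at P x (\<sigma> x) \<and> odd (walk_len (\<sigma> x))"
    and mu: "\<mu> \<in> eigenvalues P"
  shows "2 \<le> real (ell \<sigma>) * eta' P \<pi> \<sigma> * (1 + \<mu>)"
proof -
  obtain v where vnz: "v \<noteq> (\<lambda>_. 0)" and ev: "\<forall>x. (\<Sum>y\<in>UNIV. P x y * v y) = \<mu> * v x"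
    using mu unfolding eigenvalues_def by auto
  have Pnn: "P a b \<ge> 0" for a b using st unfolding stochastic_def by auto
  define f where "f a b = (v a + v b)^2" for a b
  define S where "S = {p::'a\<times>'a. P (fst p) (snd p) > 0}"
  define g where "g = (\<lambda>p::'a\<times>'a. {fst p, snd p})"
  define h where "h p = \<pi> (fst p) * P (fst p) (snd p) * f (fst p) (snd p)" for p
  define G where "G e = sum h {p\<in>S. g p = e}" for e
  define N where "N = (\<Sum>x\<in>UNIV. \<pi> x * (v x)^2)"
  define Q where "Q = Qedge P \<pi>"
  define Gm where "Gm = Defs.Gamma P"
  define W where "W x = walk_edges (\<sigma> x)" for x
  define E where "E = eta' P \<pi> \<sigma>"
  define H where "H e = G e / Q e" for e
  have hnn: "h p \<ge> 0" for p using pos Pnn unfolding h_def f_def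
    by (simp add: less_imp_le)
  have Npos: "N > 0"
  proof -
    obtain x where "v x \<noteq> 0" using vnz by auto
    then have "\<pi> x * (v x)^2 > 0" using pos by simp
    also have "\<dots> \<le> N" unfolding N_def
      by (rule member_le_sum) (use pos in \<open>auto simp: less_imp_le\<close>)
    finally show ?thesis .
  qed
  have T: "(\<Sum>p\<in>S. h p) = 2 * (1 + \<mu>) * N"
  proof -
    have "(\<Sum>p\<in>S. h p) = (\<Sum>p\<in>UNIV. h p)"
    proof (rule sum.mono_neutral_left)
      show "\<forall>p\<in>UNIV - S. h p = 0"
        using Pnn unfolding S_def h_def by (auto simp: order.order_iff_strict)
    qed auto
    also have "\<dots> = (\<Sum>x\<in>UNIV. \<Sum>y\<in>UNIV. h (x, y))"
      by (simp add: sum.cartesian_product)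
    also have "\<dots> = 2 * (1 + \<mu>) * N"
      unfolding h_def f_def N_def using quad_id[OF st stat ev] by simp
    finally show ?thesis .
  qed
  have TG: "(\<Sum>p\<in>S. h p) = (\<Sum>e\<in>Gm. G e)"
  proof -
    have "g ` S = Gm"
    proof
      show "g ` S \<subseteq> Gm" unfolding g_def S_def Gm_def Defs.Gamma_def by auto
      show "Gm \<subseteq> g ` S"
      proof
        fix e assume "e \<in> Gm"
        then obtain x y where "e = {x, y}" "P x y > 0" unfolding Gm_def Defs.Gamma_def by auto
        then show "e \<in> g ` S" unfolding g_def S_def by (intro image_eqI[where x="(x,y)"]) auto
      qed
    qed
    then show ?thesis unfolding G_def using sum.image_gen[of S h g] by simp
  qed
  have Gnn: "G e \<ge> 0" for e unfolding G_def using hnn by (simp add: sum_nonneg)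
  have Qeq: "Q {a, b} = \<pi> a * P a b" if "P a b > 0" for a b
    unfolding Q_def using Qedge_eq[OF rev that] .
  have Gge: "Q {a, b} * f a b \<le> G {a, b}" if ab: "P a b > 0" for a b
  proof -
    have "Q {a, b} * f a b = h (a, b)" using Qeq[OF ab] unfolding h_def by simp
    also have "\<dots> \<le> G {a, b}" unfolding G_def
      by (rule member_le_sum) (use ab hnn in \<open>auto simp: S_def g_def\<close>)
    finally show ?thesis .
  qed
  have Qpos: "Q e > 0" if eG: "e \<in> Gm" for e
  proof -
    obtain a b where "e = {a, b}" "P a b > 0" using eG unfolding Gm_def Defs.Gamma_def by auto
    then show ?thesis using Qeq pos by simp
  qed
  have Hnn: "H e \<ge> 0" if "e \<in> Gm" for e
    unfolding H_def using Gnn Qpos[OF that] by (simp add: less_imp_le)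
  have finG: "finite Gm" by simp
  have Ebound: "(\<Sum>x\<in>{x. e \<in> W x}. \<pi> x) / Q e \<le> E" if "e \<in> Gm" for e
    unfolding E_def eta'_def W_def Q_def
    by (rule Max_ge) (use that Gm_def in auto)
  have Wsub: "W x \<subseteq> Gm" for x
  proof -
    have "is_walk P (\<sigma> x)" using cyc unfolding is_cycle_at_def by auto
    then show ?thesis unfolding W_def walk_edges_def Gm_def Defs.Gamma_def is_walk_def by blast
  qed
  have ellge: "walk_len (\<sigma> x) \<le> ell \<sigma>" for x
    unfolding ell_def by (rule Max_ge) auto
  have perx: "4 * (v x)^2 \<le> real (ell \<sigma>) * (\<Sum>e\<in>W x. H e)" for x
  proof -
    define vs where "vs = \<sigma> x"
    define L where "L = walk_len vs"
    have cx: "is_cycle_at P x vs" and oL: "odd L" using cyc unfolding vs_def L_def by auto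
    have len: "length vs \<ge> 2" and hd: "hd vs = x" and lst: "last vs = x"
      and dist: "distinct (butlast vs)" and wk: "is_walk P vs"
      using cx unfolding is_cycle_at_def by auto
    have Ldef: "L = length vs - 1" unfolding L_def walk_len_def ..
    have ne: "vs \<noteq> []" using len by auto
    have v0: "vs ! 0 = x" using hd ne by (simp add: hd_conv_nth)
    have vL: "vs ! L = x" using lst ne by (simp add: last_conv_nth Ldef)
    have Pi: "P (vs!i) (vs!Suc i) > 0" if "i < L" for i
      using wk that unfolding is_walk_def Ldef by auto
    define c where "c i = (-1::real)^i * (v (vs!i) + v (vs!Suc i))" for i
    have "(\<Sum>i<L. c i) = v (vs!0) - (-1)^L * v (vs!L)"
      unfolding c_def by (rule alt_tele)
    then have s2: "(\<Sum>i<L. c i) = 2 * v x" using oL v0 vL by simp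
    have csq: "(c i)^2 = f (vs!i) (vs!Suc i)" for i
      unfolding c_def f_def by (simp add: power_mult_distrib power_even_eq[symmetric] mult.commute[of 2])
    have "4 * (v x)^2 = (\<Sum>i<L. c i)^2" using s2 by (simp add: power2_eq_square)
    also have "\<dots> \<le> (\<Sum>i<L. (c i)^2) * real (card {..<L})"
      by (rule sum_squared_le_sum_of_squares)
    also have "\<dots> = real L * (\<Sum>i<L. f (vs!i) (vs!Suc i))" by (simp add: csq)
    also have "\<dots> \<le> real L * (\<Sum>i<L. H {vs!i, vs!Suc i})"
    proof (rule mult_left_mono[OF sum_mono])
      fix i assume "i \<in> {..<L}"
      then have pi: "P (vs!i) (vs!Suc i) > 0" using Pi by auto
      have qp: "Q {vs!i, vs!Suc i} > 0" using Qeq[OF pi] pos pi by simp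
      show "f (vs!i) (vs!Suc i) \<le> H {vs!i, vs!Suc i}"
        unfolding H_def using Gge[OF pi] qp by (simp add: pos_le_divide_eq mult.commute)
    qed simp
    also have "(\<Sum>i<L. H {vs!i, vs!Suc i}) = (\<Sum>e\<in>W x. H e)"
    proof -
      have inj: "inj_on (\<lambda>i. {vs!i, vs!Suc i}) {..<L}"
        unfolding Ldef by (rule cyc_inj[OF dist len]) (use hd lst oL Ldef in auto)
      have img: "(\<lambda>i. {vs!i, vs!Suc i}) ` {..<L} = W x"
        unfolding W_def vs_def[symmetric] walk_edges_def Ldef by auto
      show ?thesis using sum.reindex[OF inj, of H] img by simp
    qed
    also have "real L * (\<Sum>e\<in>W x. H e) \<le> real (ell \<sigma>) * (\<Sum>e\<in>W x. H e)"
    proof (rule mult_right_mono)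
      show "real L \<le> real (ell \<sigma>)" using ellge[of x] unfolding L_def vs_def by simp
      show "0 \<le> (\<Sum>e\<in>W x. H e)" using Hnn Wsub by (meson subsetD sum_nonneg)
    qed
    finally show ?thesis .
  qed
  have "4 * N = (\<Sum>x\<in>UNIV. \<pi> x * (4 * (v x)^2))" unfolding N_def
    by (simp add: sum_distrib_left algebra_simps)
  also have "\<dots> \<le> (\<Sum>x\<in>UNIV. \<pi> x * (real (ell \<sigma>) * (\<Sum>e\<in>W x. H e)))"
    by (rule sum_mono) (use perx pos in \<open>auto intro: mult_left_mono simp: less_imp_le\<close>)
  also have "\<dots> = real (ell \<sigma>) * (\<Sum>x\<in>UNIV. \<pi> x * (\<Sum>e\<in>W x. H e))"
    by (simp add: sum_distrib_left algebra_simps)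
  also have "(\<Sum>x\<in>UNIV. \<pi> x * (\<Sum>e\<in>W x. H e)) = (\<Sum>e\<in>Gm. H e * (\<Sum>x\<in>{x. e \<in> W x}. \<pi> x))"
  proof -
    have "(\<Sum>x\<in>UNIV. \<pi> x * (\<Sum>e\<in>W x. H e)) = (\<Sum>x\<in>UNIV. \<Sum>e\<in>Gm. if e \<in> W x then \<pi> x * H e else 0)"
    proof (rule sum.cong[OF refl])
      fix x
      have "W x = {e\<in>Gm. e \<in> W x}" using Wsub by auto
      then have "(\<Sum>e\<in>W x. H e) = (\<Sum>e\<in>Gm. if e \<in> W x then H e else 0)"
        using sum.inter_filter[OF finG, of H "\<lambda>e. e \<in> W x"] by simp
      then show "\<pi> x * (\<Sum>e\<in>W x. H e) = (\<Sum>e\<in>Gm. if e \<in> W x then \<pi> x * H e else 0)"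
        by (auto simp: sum_distrib_left intro!: sum.cong)
    qed
    also have "\<dots> = (\<Sum>e\<in>Gm. \<Sum>x\<in>UNIV. if e \<in> W x then \<pi> x * H e else 0)"
      by (rule sum.swap)
    also have "\<dots> = (\<Sum>e\<in>Gm. H e * (\<Sum>x\<in>{x. e \<in> W x}. \<pi> x))"
    proof (rule sum.cong[OF refl])
      fix e
      have "(\<Sum>x\<in>{x. e \<in> W x}. \<pi> x) = (\<Sum>x\<in>UNIV. if e \<in> W x then \<pi> x else 0)"
        using sum.inter_filter[of UNIV \<pi> "\<lambda>x. e \<in> W x"] by simp
      then show "(\<Sum>x\<in>UNIV. if e \<in> W x then \<pi> x * H e else 0) = H e * (\<Sum>x\<in>{x. e \<in> W x}. \<pi> x)"
        by (auto simp: sum_distrib_left mult.commute intro!: sum.cong)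
    qed
    finally show ?thesis .
  qed
  also have "(\<Sum>e\<in>Gm. H e * (\<Sum>x\<in>{x. e \<in> W x}. \<pi> x)) \<le> (\<Sum>e\<in>Gm. G e * E)"
  proof (rule sum_mono)
    fix e assume e: "e \<in> Gm"
    have "H e * (\<Sum>x\<in>{x. e \<in> W x}. \<pi> x) = G e * ((\<Sum>x\<in>{x. e \<in> W x}. \<pi> x) / Q e)"
      unfolding H_def by simp
    also have "\<dots> \<le> G e * E" by (rule mult_left_mono[OF Ebound[OF e] Gnn])
    finally show "H e * (\<Sum>x\<in>{x. e \<in> W x}. \<pi> x) \<le> G e * E" .
  qed
  also have "(\<Sum>e\<in>Gm. G e * E) = E * (2 * (1 + \<mu>) * N)"
  proof -
    have "(\<Sum>e\<in>Gm. G e * E) = (\<Sum>e\<in>Gm. G e) * E" by (rule sum_distrib_right[symmetric])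
    then show ?thesis using T TG by simp
  qed
  finally have "4 * N \<le> real (ell \<sigma>) * (E * (2 * (1 + \<mu>) * N))"
    by (simp add: mult_left_mono)
  then have "2 * N \<le> (real (ell \<sigma>) * E * (1 + \<mu>)) * N" by (simp add: algebra_simps)
  then show ?thesis using Npos unfolding E_def by simp
qed


lemma loop_bound:
  fixes P :: "'a::finite \<Rightarrow> 'a \<Rightarrow> real" and \<pi> :: "'a \<Rightarrow> real"
  assumes st: "stochastic P" and pos: "\<forall>x. \<pi> x > 0" and stat: "stationary P \<pi>"
    and p0: "\<forall>x. p0 \<le> P x x" "0 \<le> p0"
    and mu: "\<mu> \<in> eigenvalues P"
  shows "2 * p0 \<le> 1 + \<mu>"
proof -
  obtain v where vnz: "v \<noteq> (\<lambda>_. 0)" and ev: "\<forall>x. (\<Sum>y\<in>UNIV. P x y * v y) = \<mu> * v x"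
    using mu unfolding eigenvalues_def by auto
  have Pnn: "P a b \<ge> 0" for a b using st unfolding stochastic_def by auto
  define N where "N = (\<Sum>x\<in>UNIV. \<pi> x * (v x)^2)"
  have Npos: "N > 0"
  proof -
    obtain x where "v x \<noteq> 0" using vnz by auto
    then have "\<pi> x * (v x)^2 > 0" using pos by simp
    also have "\<dots> \<le> N" unfolding N_def
      by (rule member_le_sum) (use pos in \<open>auto simp: less_imp_le\<close>)
    finally show ?thesis .
  qed
  have "4 * p0 * N = (\<Sum>x\<in>UNIV. p0 * (\<pi> x * (2 * v x)^2))"
    unfolding N_def by (simp add: sum_distrib_left algebra_simps power2_eq_square)
  also have "\<dots> \<le> (\<Sum>x\<in>UNIV. \<pi> x * P x x * (v x + v x)^2)"
  proof (rule sum_mono)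
    fix x
    have "p0 * (\<pi> x * (2 * v x)^2) \<le> P x x * (\<pi> x * (2 * v x)^2)"
      by (rule mult_right_mono) (use p0 pos in \<open>auto simp: less_imp_le\<close>)
    then show "p0 * (\<pi> x * (2 * v x)^2) \<le> \<pi> x * P x x * (v x + v x)^2"
      by (simp add: algebra_simps)
  qed
  also have "\<dots> \<le> (\<Sum>x\<in>UNIV. \<Sum>y\<in>UNIV. \<pi> x * P x y * (v x + v y)^2)"
  proof (rule sum_mono)
    fix x
    show "\<pi> x * P x x * (v x + v x)^2 \<le> (\<Sum>y\<in>UNIV. \<pi> x * P x y * (v x + v y)^2)"
      by (rule member_le_sum[where f="\<lambda>y. \<pi> x * P x y * (v x + v y)^2"])
         (use pos Pnn in \<open>auto simp: less_imp_le\<close>)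
  qed
  also have "\<dots> = 2 * (1 + \<mu>) * N" unfolding N_def by (rule quad_id[OF st stat ev])
  finally have "(2 * p0) * N \<le> (1 + \<mu>) * N" by (simp add: algebra_simps)
  then show ?thesis using Npos by simp
qed

theorem mainTheorem3:
  fixes P :: "'a::finite \<Rightarrow> 'a \<Rightarrow> real" and \<pi> :: "'a \<Rightarrow> real" and \<sigma> :: "'a \<Rightarrow> 'a list"
  assumes "stochastic P"
    and "prob_dist \<pi>" and "\<forall>x. \<pi> x > 0"
    and "stationary P \<pi>"
    and "reversible P \<pi>"
    and "ergodic_chain P"
    and "\<forall>x. is_cycle_at P x (\<sigma> x) \<and> odd (walk_len (\<sigma> x))"
  shows "inverse (1 + lambda_min P) \<le> eta' P \<pi> \<sigma> * real (ell \<sigma>) / 2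
    \<and> (ell \<sigma> = 1 \<longrightarrow> inverse (1 + lambda_min P) \<le> (1/2) * Max (range (\<lambda>x. inverse (P x x))))"
proof -
  note st = assms(1) and pos = assms(3) and stat = assms(4) and rev = assms(5) and cyc = assms(7)
  have one: "1 \<in> eigenvalues P"
    unfolding eigenvalues_def using st unfolding stochastic_def
    by (auto intro!: exI[where x="\<lambda>_. 1"] simp: fun_eq_iff)
  have lm: "lambda_min P \<in> eigenvalues P"
    unfolding lambda_min_def using eig_finite[OF rev pos] one by (intro Min_in) auto
  define l where "l = lambda_min P"
  have k: "2 \<le> real (ell \<sigma>) * eta' P \<pi> \<sigma> * (1 + l)"
    unfolding l_def by (rule key[OF st pos stat rev cyc lm])
  have nn: "0 \<le> 1 + l"
    unfolding l_def by (rule loop_bound[OF st pos stat _ _ lm, of 0, simplified])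
      (use st in \<open>auto simp: stochastic_def\<close>)
  have lp: "1 + l > 0" using k nn by (cases "1 + l = 0") auto
  have part1: "inverse (1 + l) \<le> eta' P \<pi> \<sigma> * real (ell \<sigma>) / 2"
    using k lp by (simp add: field_simps)
  have part2: "inverse (1 + l) \<le> (1/2) * Max (range (\<lambda>x. inverse (P x x)))" if e1: "ell \<sigma> = 1"
  proof -
    have loops: "P x x > 0" for x
    proof -
      define vs where "vs = \<sigma> x"
      have cx: "is_cycle_at P x vs" and od: "odd (walk_len vs)" using cyc unfolding vs_def by auto
      have "walk_len vs \<le> ell \<sigma>" unfolding vs_def ell_def by (rule Max_ge) auto
      then have "walk_len vs = 1" using od e1 by (cases "walk_len vs") auto
      then have len: "length vs = 2" unfolding walk_len_def using cx unfolding is_cycle_at_def by auto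
      have ne: "vs \<noteq> []" using len by auto
      have "P (vs!0) (vs!Suc 0) > 0" using cx len unfolding is_cycle_at_def is_walk_def by auto
      moreover have "vs ! 0 = x" using cx ne unfolding is_cycle_at_def by (auto simp: hd_conv_nth)
      moreover have "vs ! Suc 0 = x" using cx ne len unfolding is_cycle_at_def by (auto simp: last_conv_nth)
      ultimately show ?thesis by simp
    qed
    define p0 where "p0 = Min (range (\<lambda>x. P x x))"
    have "p0 \<in> range (\<lambda>x. P x x)" unfolding p0_def by (rule Min_in) auto
    then obtain x0 where x0: "p0 = P x0 x0" by auto
    have p0le: "\<forall>x. p0 \<le> P x x" unfolding p0_def by auto
    have p0pos: "p0 > 0" using x0 loops by simp
    have "2 * p0 \<le> 1 + l" unfolding l_def
      by (rule loop_bound[OF st pos stat p0le _ lm]) (use p0pos in simp)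
    then have "inverse (1 + l) \<le> inverse (2 * p0)" using p0pos by (intro le_imp_inverse_le) auto
    also have "\<dots> = (1/2) * inverse (P x0 x0)" using x0 by (simp add: field_simps)
    also have "\<dots> \<le> (1/2) * Max (range (\<lambda>x. inverse (P x x)))"
      by (intro mult_left_mono Max_ge) auto
    finally show ?thesis .
  qed
  show ?thesis using part1 part2 unfolding l_def by blast
qed

end
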